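(* Let $A\in\mathbb{R}^{n\times n}$ with spectral radius $\rho(A)<1$, let $C\in\mathbb{R}^{m\times n}$, and let $Q\in\mathbb{R}^{n\times n}$, $R\in\mathbb{R}^{m\times m}$ be symmetric positive definite, with $(A,C)$ observable and $(A,Q^{1/2})$ controllable. Let $\bar P$ be the unique stabilizing positive definite solution of the discrete-time algebraic Riccati equation $$\bar P = A\bar PA^{\intercal}+Q-(A\bar PA^{\intercal}+Q)C^{\intercal}\big(C(A\bar PA^{\intercal}+Q)C^{\intercal}+R\big)^{-1}C(A\bar PA^{\intercal}+Q).$$ Let $\bar\gamma\in(0,1)$ and $\mu\in(0,1)$. Let $(\lambda_k)_{k\ge1}$ be i.i.d. $\{0,1\}$-valued random variables with $\mathbb{P}[\lambda_k=0]=\bar\gamma$, and let $(u_k)_{k\ge1}$ be i.i.d. $\{0,1\}$-valued random variables with $\mathbb{P}[u_k=0]=\mu$, the two sequences being independent of each other. Let $P_0$ be a fixed symmetric positive semidefinite matrix and define recursively, for $k\ge1$, $$P_k=\begin{cases}\bar P, & \text{if } (\lambda_k,u_k)=(1,1),\\ AP_{k-1}A^{\intercal}+Q, & \text{if } \lambda_k=0 \text{ or } (\lambda_k,u_k)=(1,0).\end{cases}$$ Set $q=\bar\gamma+(1-\bar\gamma)\mu$. Then $$\lim_{k\to\infty}\mathbb{E}[P_k]=(1-\bar\gamma)(1-\mu)\,W+q\,S,$$ where $W=L(\sqrt{q}\,A,\bar P)$ and $S=L(\sqrt{q}\,A,Q)$.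
   Context: For a square matrix $T$ with $\rho(T)<1$ and a symmetric matrix $U$, $L(T,U)$ denotes the unique solution $V$ of the discrete-time Lyapunov equation $V=TVT^{\intercal}+U$, equivalently $L(T,U)=\sum_{j=0}^{\infty}T^jU(T^{\intercal})^j$. Here $P_k$ models the estimation error covariance of a remote legitimate user that receives the sensor's steady-state Kalman estimate (error covariance $\bar P$) only when the packet arrives ($\lambda_k=1$) and the sensor did not send noise ($u_k=1$), and otherwise predicts with the model $x_{k+1}=Ax_k+w_k$, $\mathrm{Cov}(w_k)=Q$. *)

theory Defs
  imports "HOL-Analysis.Analysis" "HOL-Probability.Probability"
begin

primrec mpow :: "real^'n^'n \<Rightarrow> nat \<Rightarrow> real^'n^'n" where
  "mpow T 0 = mat 1"
| "mpow T (Suc k) = T ** mpow T k"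

definition sym_mat :: "real^'n^'n \<Rightarrow> bool" where
  "sym_mat X \<longleftrightarrow> transpose X = X"

definition pos_def :: "real^'n^'n \<Rightarrow> bool" where
  "pos_def X \<longleftrightarrow> sym_mat X \<and> (\<forall>x. x \<noteq> 0 \<longrightarrow> x \<bullet> (X *v x) > 0)"

definition pos_semidef :: "real^'n^'n \<Rightarrow> bool" where
  "pos_semidef X \<longleftrightarrow> sym_mat X \<and> (\<forall>x. x \<bullet> (X *v x) \<ge> 0)"

definition spectral_radius :: "real^'n^'n \<Rightarrow> real" where
  "spectral_radius A =
     Max {cmod z | z. det (mat z - map_matrix complex_of_real A) = 0}"

definition msqrt :: "real^'n^'n \<Rightarrow> real^'n^'n" where
  "msqrt Q = (THE B. pos_semidef B \<and> B ** B = Q)"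

text \<open>Observability of (A,C): the observability matrix [C; CA; ...; CA^(n-1)]
  has full column rank n, i.e. trivial kernel.\<close>
definition observable :: "real^'n^'n \<Rightarrow> real^'n^'m \<Rightarrow> bool" where
  "observable A C \<longleftrightarrow>
     (\<forall>x. (\<forall>k<CARD('n). C *v (mpow A k *v x) = 0) \<longrightarrow> x = 0)"

text \<open>Controllability of (A,B): the controllability matrix [B, AB, ..., A^(n-1)B]
  has full row rank n, i.e. its transpose has trivial kernel.\<close>
definition controllable :: "real^'n^'n \<Rightarrow> real^'p^'n \<Rightarrow> bool" where
  "controllable A B \<longleftrightarrow>
     (\<forall>y. (\<forall>k<CARD('n). y v* (mpow A k ** B) = 0) \<longrightarrow> y = 0)"

definition riccati :: "real^'n^'n \<Rightarrow> real^'n^'m \<Rightarrow> real^'n^'n \<Rightarrow> real^'m^'m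
    \<Rightarrow> real^'n^'n \<Rightarrow> real^'n^'n" where
  "riccati A C Q R P =
     (let M = A ** P ** transpose A + Q
      in M - M ** transpose C ** matrix_inv (C ** M ** transpose C + R) ** C ** M)"

definition kgain :: "real^'n^'n \<Rightarrow> real^'n^'m \<Rightarrow> real^'n^'n \<Rightarrow> real^'m^'m
    \<Rightarrow> real^'n^'n \<Rightarrow> real^'m^'n" where
  "kgain A C Q R P =
     (let M = A ** P ** transpose A + Q
      in M ** transpose C ** matrix_inv (C ** M ** transpose C + R))"

definition stabilizing :: "real^'n^'n \<Rightarrow> real^'n^'m \<Rightarrow> real^'n^'n \<Rightarrow> real^'m^'m
    \<Rightarrow> real^'n^'n \<Rightarrow> bool" where
  "stabilizing A C Q R P \<longleftrightarrow>
     spectral_radius (A ** (mat 1 - kgain A C Q R P ** C)) < 1"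

definition lyap :: "real^'n^'n \<Rightarrow> real^'n^'n \<Rightarrow> real^'n^'n" where
  "lyap T U = (THE V. V = T ** V ** transpose T + U)"

text \<open>Error covariance recursion of the remote user; index k \<ge> 1 uses lam k, u k.\<close>
primrec Pseq :: "real^'n^'n \<Rightarrow> real^'n^'n \<Rightarrow> real^'n^'n \<Rightarrow> real^'n^'n
    \<Rightarrow> (nat \<Rightarrow> 'a \<Rightarrow> nat) \<Rightarrow> (nat \<Rightarrow> 'a \<Rightarrow> nat) \<Rightarrow> nat \<Rightarrow> 'a \<Rightarrow> real^'n^'n" where
  "Pseq A Q Pbar P0 lam u 0 \<omega> = P0"
| "Pseq A Q Pbar P0 lam u (Suc k) \<omega> =
     (if lam (Suc k) \<omega> = 1 \<and> u (Suc k) \<omega> = 1 then Pbar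
      else A ** Pseq A Q Pbar P0 lam u k \<omega> ** transpose A + Q)"

end

theory Submission
  imports Defs "Jordan_Normal_Form.Spectral_Radius"
begin


no_notation Matrix.vec_index (infixl \<open>$\<close> 100)
notation Matrix.vec_index (infixl \<open>$v\<close> 100)
no_notation Matrix.scalar_prod (infix \<open>\<bullet>\<close> 70)
hide_const (open) Matrix.mat Determinant.det Spectral_Radius.spectral_radius

lemma mpow_Suc_right: "mpow T (Suc k) = mpow T k ** T"
  by (induction k) (simp_all add: matrix_mul_assoc matrix_mul_lid matrix_mul_rid)

lemma mat_mult_vec_nth[simp]: "(mat z *v w) $ a = z * (w $ a :: 'a::comm_ring_1)"
  unfolding matrix_vector_mult_def Finite_Cartesian_Product.mat_def
  by (simp add: if_distrib[of "\<lambda>x. x * _"] cong: if_cong)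

lemma matrix_add_rdistrib': "((B + C) ** A) = (B ** A) + (C ** (A::'a::semiring_1^_^_))"
  by (vector matrix_matrix_mult_def sum.distrib[symmetric] field_simps)

lemma mpow_bounded:
  fixes A :: "real^'n^'n"
  assumes sr: "Defs.spectral_radius A < 1"
  shows "\<exists>c. \<forall>k i j. \<bar>mpow A k $ i $ j\<bar> \<le> c"
proof -
  define n where "n = CARD('n)"
  have n0: "n > 0" unfolding n_def by simp
  obtain f where bij: "bij_betw f {0..<n} (UNIV::'n set)"
    using ex_bij_betw_nat_finite[of "UNIV::'n set"] unfolding n_def by auto
  define g where "g = inv_into {0..<n} f"
  have fg: "f (g a) = a" for a using bij unfolding g_def
    by (meson UNIV_I bij_betw_inv_into_right)
  have gf: "i < n \<Longrightarrow> g (f i) = i" for i using bij unfolding g_def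
    by (simp add: bij_betw_inv_into_left)
  have gn: "g a < n" for a using bij unfolding g_def
    by (metis UNIV_I atLeastLessThan_iff bij_betw_def inv_into_into)
  have reidx: "(\<Sum>l<n. h (f l)) = (\<Sum>b\<in>UNIV. h b)" for h :: "'n \<Rightarrow> complex"
  proof -
    have "(\<Sum>b\<in>UNIV. h b) = (\<Sum>l\<in>{0..<n}. h (f l))"
      using sum.reindex_bij_betw[OF bij, of h] by simp
    then show ?thesis by (simp add: lessThan_atLeast0)
  qed
  define toM :: "real^'n^'n \<Rightarrow> complex mat" where
    "toM X = Matrix.mat n n (\<lambda>(i,j). complex_of_real (X $ f i $ f j))" for X
  have toM_carrier: "toM X \<in> carrier_mat n n" for X unfolding toM_def by simp
  have toM_mult: "toM (X ** Y) = toM X * toM Y" for X Y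
  proof (rule eq_matI)
    fix i j assume ij: "i < dim_row (toM X * toM Y)" "j < dim_col (toM X * toM Y)"
    then have i: "i < n" and j: "j < n" by (auto simp: toM_def)
    have "(toM X * toM Y) $$ (i,j) = (\<Sum>l\<in>{0..<n}. toM X $$ (i,l) * toM Y $$ (l,j))"
      using i j by (simp add: toM_def scalar_prod_def)
    also have "\<dots> = (\<Sum>l<n. complex_of_real (X $ f i $ f l * Y $ f l $ f j))"
      using i j by (simp add: toM_def lessThan_atLeast0)
    also have "\<dots> = (\<Sum>b\<in>UNIV. complex_of_real (X $ f i $ b * Y $ b $ f j))"
      by (rule reidx)
    also have "\<dots> = toM (X ** Y) $$ (i,j)"
      using i j by (simp add: toM_def matrix_matrix_mult_def)
    finally show "toM (X ** Y) $$ (i, j) = (toM X * toM Y) $$ (i, j)" by simp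
  qed (auto simp: toM_def)
  have toM_one: "toM (mat 1) = 1\<^sub>m n"
    proof (rule eq_matI)
    fix i j assume "i < dim_row (1\<^sub>m n)" "j < dim_col (1\<^sub>m n)"
    then have i: "i < n" and j: "j < n" by auto
    have "(f i = f j) = (i = j)" using gf i j by metis
    then show "toM (mat 1) $$ (i, j) = 1\<^sub>m n $$ (i, j)"
      using i j by (simp add: toM_def Finite_Cartesian_Product.mat_def)
  qed (auto simp: toM_def)
  define MA where "MA = toM A"
  have MA: "MA \<in> carrier_mat n n" unfolding MA_def by (rule toM_carrier)
  have pow: "toM (mpow A k) = MA ^\<^sub>m k" for k
  proof (induction k)
    case 0 then show ?case using MA by (simp add: toM_one)
  next
    case (Suc k) then show ?case by (simp only: mpow_Suc_right toM_mult pow_mat.simps MA_def)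
  qed
  define Ac where "Ac = map_matrix complex_of_real A"
  have mv: "(MA *\<^sub>v v) $v (g a) = (Ac *v (\<chi> b. v $v g b)) $ a"
    if v: "v \<in> carrier_vec n" for v a
  proof -
    have "(MA *\<^sub>v v) $v (g a) = (\<Sum>l\<in>{0..<n}. MA $$ (g a, l) * v $v l)"
      using v MA gn[of a] by (simp add: scalar_prod_def)
    also have "\<dots> = (\<Sum>l<n. complex_of_real (A $ a $ f l) * v $v g (f l))"
      using gn[of a] by (intro sum.cong) (auto simp: MA_def toM_def fg gf lessThan_atLeast0)
    also have "\<dots> = (\<Sum>b\<in>UNIV. complex_of_real (A $ a $ b) * v $v g b)"
      by (rule reidx)
    also have "\<dots> = (Ac *v (\<chi> b. v $v g b)) $ a"
      by (simp add: Ac_def matrix_vector_mult_def)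
    finally show ?thesis .
  qed
  have ev_iff: "eigenvalue MA z \<longleftrightarrow> det (mat z - Ac) = 0" for z
  proof
    assume "eigenvalue MA z"
    then obtain v where v: "v \<in> carrier_vec n" "v \<noteq> 0\<^sub>v n" "MA *\<^sub>v v = z \<cdot>\<^sub>v v"
      unfolding eigenvalue_def eigenvector_def using MA by auto
    define w :: "complex^'n" where "w = (\<chi> b. v $v g b)"
    have "(mat z - Ac) *v w = 0"
    proof (subst Finite_Cartesian_Product.vec_eq_iff, intro allI)
      fix a
      have "(Ac *v w) $ a = z * w $ a"
        using mv[OF v(1), of a] v(3) gn[of a] v(1) unfolding w_def by simp
      then show "((mat z - Ac) *v w) $ a = 0 $ a"
        by (simp add: matrix_vector_mult_diff_rdistrib)
    qed
    moreover have "w \<noteq> 0"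
    proof
      assume "w = 0"
      then have "v $v l = 0" if "l < n" for l
        using that gf[of l] unfolding w_def by (metis vec_lambda_beta zero_index)
      then have "v = 0\<^sub>v n" using v(1) by (intro eq_vecI) auto
      with v(2) show False by simp
    qed
    ultimately have "\<not> invertible (mat z - Ac)"
      using matrix_left_invertible_ker invertible_left_inverse by blast
    then show "det (mat z - Ac) = 0" using invertible_det_nz by blast
  next
    assume "det (mat z - Ac) = 0"
    then have "\<not> invertible (mat z - Ac)" using invertible_det_nz by blast
    then obtain w where w: "(mat z - Ac) *v w = 0" "w \<noteq> 0"
      using matrix_left_invertible_ker invertible_left_inverse by blast
    define v where "v = vec n (\<lambda>l. w $ f l)"
    have v: "v \<in> carrier_vec n" unfolding v_def by simp
    have wv: "w = (\<chi> b. v $v g b)" unfolding v_def by (simp add: gn fg Finite_Cartesian_Product.vec_eq_iff)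
    have Aw: "Ac *v w = z *s w"
      using w(1) by (simp add: matrix_vector_mult_diff_rdistrib Finite_Cartesian_Product.vec_eq_iff)
    have "MA *\<^sub>v v = z \<cdot>\<^sub>v v"
    proof (rule eq_vecI)
      fix l assume "l < dim_vec (z \<cdot>\<^sub>v v)"
      then have l: "l < n" using v by simp
      have "(MA *\<^sub>v v) $v l = (MA *\<^sub>v v) $v g (f l)" using gf[OF l] by simp
      also have "\<dots> = (Ac *v w) $ f l" using mv[OF v, of "f l"] wv by simp
      also have "\<dots> = z * v $v l" using Aw l by (simp add: v_def)
      finally show "(MA *\<^sub>v v) $v l = (z \<cdot>\<^sub>v v) $v l" using l v by simp
    qed (use MA v in auto)
    moreover have "v \<noteq> 0\<^sub>v n"
    proof
      assume "v = 0\<^sub>v n"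
      then have "w = 0" using wv gn by (simp add: Finite_Cartesian_Product.vec_eq_iff)
      with w(2) show False by simp
    qed
    ultimately show "eigenvalue MA z"
      unfolding eigenvalue_def eigenvector_def using MA v by auto
  qed
  have specset: "{cmod z | z. det (mat z - Ac) = 0} = norm ` spectrum MA"
    unfolding spectrum_def using ev_iff by auto
  have fin: "finite (norm ` spectrum MA)" using card_finite_spectrum[OF MA] by simp
  have "Spectral_Radius.spectral_radius MA < 1"
  proof -
    obtain ev where ev: "ev \<in> spectrum MA" "Spectral_Radius.spectral_radius MA = norm ev"
      using spectral_radius_mem_max(1)[OF MA n0] by auto
    have "norm ev \<le> Max (norm ` spectrum MA)" using fin ev(1) by auto
    also have "\<dots> = Defs.spectral_radius A"
      unfolding Defs.spectral_radius_def Ac_def[symmetric] specset ..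
    finally show ?thesis using ev(2) sr by simp
  qed
  from spectral_radius_jnf_norm_bound_less_1_upper_triangular[OF MA this]
  obtain c where c: "\<And>k. norm_bound (MA ^\<^sub>m k) c" by auto
  have "\<bar>mpow A k $ a $ b\<bar> \<le> c" for k a b
  proof -
    have "norm ((MA ^\<^sub>m k) $$ (g a, g b)) \<le> c"
      using c[of k] gn MA unfolding norm_bound_def by auto
    moreover have "(MA ^\<^sub>m k) $$ (g a, g b) = complex_of_real (mpow A k $ a $ b)"
      unfolding pow[symmetric] using gn by (simp add: toM_def fg)
    ultimately show ?thesis by simp
  qed
  then show ?thesis by blast
qed


lemma norm_mat_bound:
  fixes X :: "real^'m^'n"
  assumes "\<And>i j. \<bar>X $ i $ j\<bar> \<le> b"
  shows "norm X \<le> real CARD('n) * real CARD('m) * b"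
proof -
  have "norm X \<le> (\<Sum>i\<in>UNIV. norm (X $ i))"
    unfolding norm_vec_def by (rule L2_set_le_sum) simp
  also have "\<dots> \<le> (\<Sum>i\<in>(UNIV::'n set). real CARD('m) * b)"
  proof (rule sum_mono)
    fix i
    have "norm (X $ i) \<le> (\<Sum>j\<in>UNIV. \<bar>X $ i $ j\<bar>)" by (rule norm_le_l1_cart)
    also have "\<dots> \<le> (\<Sum>j\<in>(UNIV::'m set). b)" by (rule sum_mono) (rule assms)
    finally show "norm (X $ i) \<le> real CARD('m) * b" by simp
  qed
  finally show ?thesis by simp
qed

lemma mult_entry_bound:
  fixes X :: "real^'m^'n" and Y :: "real^'p^'m"
  assumes "\<And>i j. \<bar>X $ i $ j\<bar> \<le> bx" "\<And>i j. \<bar>Y $ i $ j\<bar> \<le> by"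
  shows "\<bar>(X ** Y) $ i $ j\<bar> \<le> real CARD('m) * (bx * by)"
proof -
  have "\<bar>(X ** Y) $ i $ j\<bar> = \<bar>\<Sum>l\<in>UNIV. X $ i $ l * Y $ l $ j\<bar>"
    by (simp add: matrix_matrix_mult_def)
  also have "\<dots> \<le> (\<Sum>l\<in>UNIV. \<bar>X $ i $ l * Y $ l $ j\<bar>)" by (rule sum_abs)
  also have "\<dots> \<le> (\<Sum>l\<in>(UNIV::'m set). bx * by)"
  proof (rule sum_mono)
    fix l
    have "\<bar>X $ i $ l\<bar> * \<bar>Y $ l $ j\<bar> \<le> bx * by"
      using assms by (intro mult_mono) (auto intro: order_trans[OF abs_ge_zero])
    then show "\<bar>X $ i $ l * Y $ l $ j\<bar> \<le> bx * by" by (simp add: abs_mult)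
  qed
  finally show ?thesis by simp
qed



lemma decay:
  fixes A D :: "real^'n^'n"
  assumes c: "\<And>k i j. \<bar>mpow A k $ i $ j\<bar> \<le> c" and q: "0 \<le> q" "q < 1"
  shows "(\<lambda>k. q ^ k *\<^sub>R (mpow A k ** D ** transpose (mpow A k))) \<longlonglongrightarrow> 0"
proof -
  define d where "d = norm D"
  have d: "\<bar>D $ i $ j\<bar> \<le> d" for i j
    unfolding d_def using component_le_norm_cart[of "D $ i" j] Finite_Cartesian_Product.norm_nth_le[of D i] by linarith
  have tr: "\<bar>transpose (mpow A k) $ i $ j\<bar> \<le> c" for k i j
    using c by (simp add: transpose_def)
  define K where "K = real CARD('n) * real CARD('n) * (real CARD('n) * (real CARD('n) * (c * d) * c))"
  have nb: "norm (mpow A k ** D ** transpose (mpow A k)) \<le> K" for k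
    unfolding K_def
    by (intro norm_mat_bound mult_entry_bound c d tr)
  have "(\<lambda>k. q ^ k * K) \<longlonglongrightarrow> 0 * K"
    by (intro tendsto_mult tendsto_const LIMSEQ_power_zero) (use q in auto)
  then have g: "(\<lambda>k. q ^ k * K) \<longlonglongrightarrow> 0" by simp
  show ?thesis
  proof (rule Lim_null_comparison[OF _ g], intro always_eventually allI)
    fix k
    show "norm (q ^ k *\<^sub>R (mpow A k ** D ** transpose (mpow A k))) \<le> q ^ k * K"
      using nb[of k] q by (simp add: mult_left_mono)
  qed
qed
lemma iter_form:
  fixes A :: "real^'n^'n"
  assumes "\<And>k. Z (Suc k) = q *\<^sub>R (A ** Z k ** transpose A)"
  shows "Z k = q ^ k *\<^sub>R (mpow A k ** Z 0 ** transpose (mpow A k))"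
proof (induction k)
  case 0 then show ?case by simp
next
  case (Suc k)
  have "Z (Suc k) = q *\<^sub>R (A ** (q ^ k *\<^sub>R (mpow A k ** Z 0 ** transpose (mpow A k))) ** transpose A)"
    using assms Suc by simp
  also have "\<dots> = q ^ Suc k *\<^sub>R (mpow A (Suc k) ** Z 0 ** transpose (mpow A (Suc k)))"
    by (simp add: matrix_scalar_ac scalar_matrix_assoc[symmetric] matrix_mul_assoc matrix_transpose_mul)
  finally show ?case .
qed

lemma sandwich_scale:
  fixes A V :: "real^'n^'n"
  assumes "0 \<le> q"
  shows "(sqrt q *\<^sub>R A) ** V ** transpose (sqrt q *\<^sub>R A) = q *\<^sub>R (A ** V ** transpose A)"
  using assms by (simp add: transpose_scalar matrix_scalar_ac scalar_matrix_assoc[symmetric])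

lemma lyap_char:
  fixes A U :: "real^'n^'n"
  assumes c: "\<And>k i j. \<bar>mpow A k $ i $ j\<bar> \<le> c" and q: "0 \<le> q" "q < 1"
  shows "lyap (sqrt q *\<^sub>R A) U = q *\<^sub>R (A ** lyap (sqrt q *\<^sub>R A) U ** transpose A) + U"
proof -
  define F where "F V = V - q *\<^sub>R (A ** V ** transpose A)" for V :: "real^'n^'n"
  have lin: "linear F"
  proof (rule linearI)
    fix V W :: "real^'n^'n" and r :: real
    show "F (V + W) = F V + F W"
      unfolding F_def by (simp add: matrix_add_ldistrib matrix_add_rdistrib' algebra_simps)
    show "F (r *\<^sub>R V) = r *\<^sub>R F V"
      unfolding F_def by (simp add: matrix_scalar_ac scalar_matrix_assoc[symmetric] algebra_simps)
  qed
  have ker: "V = 0" if "F V = 0" for V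
  proof -
    have V: "V = q *\<^sub>R (A ** V ** transpose A)" using that unfolding F_def by simp
    have "(\<lambda>k::nat. V) = (\<lambda>k. q ^ k *\<^sub>R (mpow A k ** V ** transpose (mpow A k)))"
      using iter_form[of "\<lambda>_. V" q A] V by auto
    then have "(\<lambda>k::nat. V) \<longlonglongrightarrow> 0" using decay[OF c q] by simp
    then show ?thesis using LIMSEQ_unique tendsto_const by blast
  qed
  have "inj F"
    using lin ker by (metis linear_injective_0)
  then have "surj F" using lin linear_inj_imp_surj by blast
  then obtain V where V: "F V = U" by (metis surjD)
  have eqv: "(W = (sqrt q *\<^sub>R A) ** W ** transpose (sqrt q *\<^sub>R A) + U) \<longleftrightarrow> F W = U" for W
    unfolding sandwich_scale[OF q(1)] F_def by (auto simp: algebra_simps)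
  have "\<exists>!W. W = (sqrt q *\<^sub>R A) ** W ** transpose (sqrt q *\<^sub>R A) + U"
  proof (rule ex1I[of _ V])
    show "V = (sqrt q *\<^sub>R A) ** V ** transpose (sqrt q *\<^sub>R A) + U" using V eqv by blast
    fix W assume "W = (sqrt q *\<^sub>R A) ** W ** transpose (sqrt q *\<^sub>R A) + U"
    then have "F W = F V" using V eqv by blast
    then have "F (W - V) = 0" using lin by (simp add: linear_diff)
    then have "W - V = 0" by (rule ker)
    then show "W = V" by simp
  qed
  then have "lyap (sqrt q *\<^sub>R A) U = (sqrt q *\<^sub>R A) ** lyap (sqrt q *\<^sub>R A) U ** transpose (sqrt q *\<^sub>R A) + U"
    unfolding lyap_def by (rule theI')
  then show ?thesis unfolding sandwich_scale[OF q(1)] .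
qed



lemma Pseq_cong:
  "(\<And>l. 1 \<le> l \<Longrightarrow> l \<le> k \<Longrightarrow> lam l \<omega> = lam' l \<omega>' \<and> u l \<omega> = u' l \<omega>') \<Longrightarrow>
   Pseq A Q Pbar P0 lam u k \<omega> = Pseq A Q Pbar P0 lam' u' k \<omega>'"
  by (induction k) auto


lemma PiM_count_nat: "finite J \<Longrightarrow> PiM J (\<lambda>_. count_space (UNIV::nat set)) = count_space (J \<rightarrow>\<^sub>E UNIV)"
  using count_space_PiM_finite[of J "\<lambda>_. UNIV::nat set"] by simp

lemma sand_linear: "linear (\<lambda>X::real^'n^'n. A ** X ** transpose A)"
proof (rule linearI)
  fix V W :: "real^'n^'n" and r :: real
  show "A ** (V + W) ** transpose A = A ** V ** transpose A + A ** W ** transpose A"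
    by (simp add: matrix_add_ldistrib matrix_add_rdistrib' algebra_simps)
  show "A ** (r *\<^sub>R V) ** transpose A = r *\<^sub>R (A ** V ** transpose A)"
    by (simp add: matrix_scalar_ac scalar_matrix_assoc[symmetric] algebra_simps)
qed

lemma sand_bounded_linear: "bounded_linear (\<lambda>X::real^'n^'n. A ** X ** transpose A)"
  using sand_linear linear_conv_bounded_linear by blast

lemma bl_entry: "bounded_linear (\<lambda>X::real^'n^'m. X $ i $ j)"
  using bounded_linear_compose[OF bounded_linear_vec_nth bounded_linear_vec_nth] .

context prob_space
begin

lemma rv_restrict:
  fixes X :: "'i \<Rightarrow> 'a \<Rightarrow> nat" and \<phi> :: "('i \<Rightarrow> nat) \<Rightarrow> 'b::topological_space"
  assumes ind: "indep_vars (\<lambda>_. count_space UNIV) X I" and J: "finite J" "J \<subseteq> I"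
  shows "(\<lambda>\<omega>. \<phi> (restrict (\<lambda>i. X i \<omega>) J)) \<in> borel_measurable M"
proof -
  have "(\<lambda>\<omega>. restrict (\<lambda>i. X i \<omega>) J) \<in> M \<rightarrow>\<^sub>M PiM J (\<lambda>_. count_space UNIV)"
    using ind J by (intro measurable_restrict) (auto simp: indep_vars_def)
  moreover have "\<phi> \<in> PiM J (\<lambda>_. count_space UNIV) \<rightarrow>\<^sub>M borel"
    by (subst PiM_count_nat[OF J(1)]) simp
  ultimately show ?thesis by (rule measurable_compose)
qed

lemma indep_restrict:
  fixes X :: "'i \<Rightarrow> 'a \<Rightarrow> nat" and \<phi> \<psi> :: "('i \<Rightarrow> nat) \<Rightarrow> real"
  assumes ind: "indep_vars (\<lambda>_. count_space UNIV) X I"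
    and AB: "A \<inter> B = {}" "A \<subseteq> I" "B \<subseteq> I" and fin: "finite A" "finite B"
  shows "indep_var borel (\<lambda>\<omega>. \<phi> (restrict (\<lambda>i. X i \<omega>) A)) borel (\<lambda>\<omega>. \<psi> (restrict (\<lambda>i. X i \<omega>) B))"
proof -
  have "indep_var borel (\<phi> \<circ> (\<lambda>\<omega>. restrict (\<lambda>i. X i \<omega>) A)) borel (\<psi> \<circ> (\<lambda>\<omega>. restrict (\<lambda>i. X i \<omega>) B))"
    by (rule indep_var_compose[OF indep_var_restrict[OF ind AB]])
       (subst PiM_count_nat, simp_all add: fin)+
  then show ?thesis by (simp add: comp_def)
qed

lemma expect_01:
  fixes f :: "'a \<Rightarrow> nat"
  assumes f: "f \<in> M \<rightarrow>\<^sub>M count_space UNIV" and v: "\<And>\<omega>. \<omega> \<in> space M \<Longrightarrow> f \<omega> \<in> {0,1}"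
    and m: "measure M {\<omega>\<in>space M. f \<omega> = 0} = g"
  shows "integral\<^sup>L M (\<lambda>\<omega>. real (f \<omega>)) = 1 - g"
proof -
  define S where "S = {\<omega>\<in>space M. f \<omega> = 0}"
  have "S = f -` {0} \<inter> space M" unfolding S_def by auto
  then have S: "S \<in> sets M" using measurable_sets[OF f, of "{0}"] by simp
  have "integral\<^sup>L M (\<lambda>\<omega>. real (f \<omega>)) = integral\<^sup>L M (\<lambda>\<omega>. 1 - indicator S \<omega>)"
  proof (rule Bochner_Integration.integral_cong)
    fix x assume "x \<in> space M"
    then have "f x = 0 \<or> f x = 1" using v by auto
    then show "real (f x) = 1 - indicator S x" using \<open>x \<in> space M\<close> by (auto simp: S_def split: split_indicator)
  qed simp
  also have "\<dots> = integral\<^sup>L M (\<lambda>\<omega>. 1) - integral\<^sup>L M (indicator S)"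
    by (rule Bochner_Integration.integral_diff) (use S in \<open>auto intro!: integrable_real_indicator simp: less_top[symmetric]\<close>)
  also have "\<dots> = 1 - g"
    using S prob_space m sets.sets_into_space[OF S] by (simp add: S_def Int_absorb2)
  finally show ?thesis .
qed

lemma expect_rec:
  fixes lam u :: "nat \<Rightarrow> 'a \<Rightarrow> nat" and A Q Pbar P0 :: "real^'n^'n" and gbar mu :: real
  assumes ind: "indep_vars (\<lambda>_. count_space UNIV) (\<lambda>i. case i of Inl k \<Rightarrow> lam k | Inr k \<Rightarrow> u k) ({1..} <+> {1..})"
    and lv: "\<And>k \<omega>. k \<ge> 1 \<Longrightarrow> \<omega> \<in> space M \<Longrightarrow> lam k \<omega> \<in> {0, 1}"
    and uv: "\<And>k \<omega>. k \<ge> 1 \<Longrightarrow> \<omega> \<in> space M \<Longrightarrow> u k \<omega> \<in> {0, 1}"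
    and lp: "\<And>k. k \<ge> 1 \<Longrightarrow> measure M {\<omega> \<in> space M. lam k \<omega> = 0} = gbar"
    and up: "\<And>k. k \<ge> 1 \<Longrightarrow> measure M {\<omega> \<in> space M. u k \<omega> = 0} = mu"
  shows "integral\<^sup>L M (Pseq A Q Pbar P0 lam u (Suc k)) =
     ((1 - gbar) * (1 - mu)) *\<^sub>R Pbar + (gbar + (1 - gbar) * mu) *\<^sub>R
       (A ** integral\<^sup>L M (Pseq A Q Pbar P0 lam u k) ** transpose A + Q)"
proof -
  define X where "X = (\<lambda>i. case i of Inl k \<Rightarrow> lam k | Inr k \<Rightarrow> u k)"
  define I where "I = ({1..} <+> {1..} :: (nat + nat) set)"
  have ind': "indep_vars (\<lambda>_. count_space UNIV) X I" using ind unfolding X_def I_def .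
  have measX: "X i \<in> M \<rightarrow>\<^sub>M count_space UNIV" if "i \<in> I" for i
    using ind' that unfolding indep_vars_def by auto
  have measl: "lam (Suc k) \<in> M \<rightarrow>\<^sub>M count_space UNIV"
  proof -
    have "Inl (Suc k) \<in> I" unfolding I_def by (rule InlI) simp
    then show ?thesis using measX[of "Inl (Suc k)"] by (simp add: X_def)
  qed
  have measu: "u (Suc k) \<in> M \<rightarrow>\<^sub>M count_space UNIV"
  proof -
    have "Inr (Suc k) \<in> I" unfolding I_def by (rule InrI) simp
    then show ?thesis using measX[of "Inr (Suc k)"] by (simp add: X_def)
  qed
  define P where "P = Pseq A Q Pbar P0 lam u"
  define J1 where "J1 j = ({1..j} <+> {1..j} :: (nat+nat) set)" for j
  define J2 where "J2 = {Inl (Suc k), Inr (Suc k) :: nat + nat}"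
  have J1: "finite (J1 j)" "J1 j \<subseteq> I" for j unfolding J1_def I_def by auto
  have J2: "finite J2" "J2 \<subseteq> I" unfolding J2_def I_def by auto
  have J12: "J2 \<inter> J1 k = {}" unfolding J1_def J2_def by auto
  define \<Phi> where "\<Phi> j x = Pseq A Q Pbar P0 (\<lambda>l _. x (Inl l)) (\<lambda>l _. x (Inr l)) j ()"
    for j and x :: "nat+nat \<Rightarrow> nat"
  have rep: "P j \<omega> = \<Phi> j (restrict (\<lambda>i. X i \<omega>) (J1 j))" for j \<omega>
    unfolding P_def \<Phi>_def by (rule Pseq_cong) (auto simp: J1_def X_def)
  define sand where "sand Y = A ** Y ** transpose A" for Y :: "real^'n^'n"
  have bl: "bounded_linear sand" unfolding sand_def by (rule sand_bounded_linear)
  obtain K where K: "\<And>Y. norm (sand Y) \<le> norm Y * K" "K > 0"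
    using bounded_linear.pos_bounded[OF bl] by blast
  have bnd: "\<exists>B. \<forall>\<omega>. norm (P j \<omega>) \<le> B" for j
  proof (induction j)
    case 0 show ?case by (auto simp: P_def)
  next
    case (Suc j)
    then obtain B where B: "\<And>\<omega>. norm (P j \<omega>) \<le> B" by blast
    have "norm (P (Suc j) \<omega>) \<le> max (norm Pbar) (B * K + norm Q)" for \<omega>
    proof -
      have "norm (sand (P j \<omega>) + Q) \<le> norm (sand (P j \<omega>)) + norm Q" by (rule norm_triangle_ineq)
      also have "\<dots> \<le> B * K + norm Q"
      proof -
        have "norm (P j \<omega>) * K \<le> B * K" using B[of \<omega>] K(2) by (simp add: mult_right_mono)
        then show ?thesis using K(1)[of "P j \<omega>"] by simp
      qed
      finally show ?thesis by (simp add: P_def sand_def le_max_iff_disj)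
    qed
    then show ?case by blast
  qed
  have measP: "P j \<in> borel_measurable M" for j
  proof -
    have "P j = (\<lambda>\<omega>. \<Phi> j (restrict (\<lambda>i. X i \<omega>) (J1 j)))" using rep by (intro ext) 
    then show ?thesis using rv_restrict[OF ind' J1] by simp
  qed
  have intP: "integrable M (P j)" for j
  proof -
    obtain B where "\<And>\<omega>. norm (P j \<omega>) \<le> B" using bnd by blast
    then show ?thesis by (intro integrable_const_bound[where B=B] measP) auto
  qed
  define G where "G \<omega> = sand (P k \<omega>) + Q" for \<omega>
  have intG: "integrable M G"
    unfolding G_def by (rule Bochner_Integration.integrable_add[OF integrable_bounded_linear[OF bl intP]]) simp
  have intGG: "integral\<^sup>L M G = sand (integral\<^sup>L M (P k)) + Q"
    unfolding G_def
    by (subst Bochner_Integration.integral_add) (auto simp: integral_bounded_linear[OF bl intP] prob_space intro!: integrable_bounded_linear[OF bl intP])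
  define r where "r \<omega> = real (lam (Suc k) \<omega>) * real (u (Suc k) \<omega>)" for \<omega>
  define \<psi>r where "\<psi>r x = real (x (Inl (Suc k))) * real (x (Inr (Suc k)))" for x :: "nat+nat \<Rightarrow> nat"
  have r_rep: "r \<omega> = \<psi>r (restrict (\<lambda>i. X i \<omega>) J2)" for \<omega>
    by (simp add: r_def \<psi>r_def J2_def X_def)
  have r01: "r \<omega> \<in> {0,1}" if "\<omega> \<in> space M" for \<omega>
    using lv[of "Suc k" \<omega>] uv[of "Suc k" \<omega>] that by (auto simp: r_def)
  have measr: "r \<in> borel_measurable M"
  proof -
    have "r = (\<lambda>\<omega>. \<psi>r (restrict (\<lambda>i. X i \<omega>) J2))" using r_rep by (intro ext)
    then show ?thesis using rv_restrict[OF ind' J2] by simp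
  qed
  have intr: "integrable M r"
  proof (rule integrable_const_bound[where B=1])
    show "AE x in M. norm (r x) \<le> 1"
    proof (rule AE_I2)
      fix x assume "x \<in> space M"
      then have "r x = 0 \<or> r x = 1" using r01 by auto
      then show "norm (r x) \<le> 1" by auto
    qed
  qed (rule measr)
  have Er: "integral\<^sup>L M r = (1 - gbar) * (1 - mu)"
  proof -
    have iv: "indep_var borel (\<lambda>\<omega>. (\<lambda>x. real (x (Inl (Suc k)))) (restrict (\<lambda>i. X i \<omega>) {Inl (Suc k)}))
       borel (\<lambda>\<omega>. (\<lambda>x. real (x (Inr (Suc k)))) (restrict (\<lambda>i. X i \<omega>) {Inr (Suc k)}))"
      by (rule indep_restrict[OF ind']) (auto simp: I_def)
    then have iv': "indep_var borel (\<lambda>\<omega>. real (lam (Suc k) \<omega>)) borel (\<lambda>\<omega>. real (u (Suc k) \<omega>))"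
      by (simp add: X_def)
    have il: "integrable M (\<lambda>\<omega>. real (lam (Suc k) \<omega>))"
      proof (rule integrable_const_bound[where B=1])
      show "AE x in M. norm (real (lam (Suc k) x)) \<le> 1"
      proof (rule AE_I2)
        fix x assume "x \<in> space M"
        then have "lam (Suc k) x \<in> {0,1}" by (intro lv) auto
        then show "norm (real (lam (Suc k) x)) \<le> 1" by auto
      qed
      show "(\<lambda>x. real (lam (Suc k) x)) \<in> borel_measurable M"
        by (rule measurable_compose[OF measl]) simp
    qed
    have iu: "integrable M (\<lambda>\<omega>. real (u (Suc k) \<omega>))"
      proof (rule integrable_const_bound[where B=1])
      show "AE x in M. norm (real (u (Suc k) x)) \<le> 1"
      proof (rule AE_I2)
        fix x assume "x \<in> space M"
        then have "u (Suc k) x \<in> {0,1}" by (intro uv) auto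
        then show "norm (real (u (Suc k) x)) \<le> 1" by auto
      qed
      show "(\<lambda>x. real (u (Suc k) x)) \<in> borel_measurable M"
        by (rule measurable_compose[OF measu]) simp
    qed
    have "integral\<^sup>L M r = integral\<^sup>L M (\<lambda>\<omega>. real (lam (Suc k) \<omega>)) * integral\<^sup>L M (\<lambda>\<omega>. real (u (Suc k) \<omega>))"
      unfolding r_def by (rule indep_var_lebesgue_integral[OF iv' il iu])
    also have "\<dots> = (1 - gbar) * (1 - mu)"
      using expect_01[OF measl, of gbar] expect_01[OF measu, of mu] lv uv lp up by simp
    finally show ?thesis .
  qed
  have E1r: "integral\<^sup>L M (\<lambda>\<omega>. 1 - r \<omega>) = 1 - (1 - gbar) * (1 - mu)"
    using Er intr by (subst Bochner_Integration.integral_diff) (auto simp: prob_space)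
  have comp: "integral\<^sup>L M (P (Suc k)) $ i $ j =
      ((1 - gbar) * (1 - mu)) * Pbar $ i $ j + (1 - (1 - gbar) * (1 - mu)) * integral\<^sup>L M G $ i $ j" for i j
  proof -
    define \<phi>G where "\<phi>G x = (sand (\<Phi> k x) + Q) $ i $ j" for x
    define \<psi> where "\<psi> x = 1 - \<psi>r x" for x
    have Gij: "G \<omega> $ i $ j = \<phi>G (restrict (\<lambda>i. X i \<omega>) (J1 k))" for \<omega>
      by (simp add: G_def \<phi>G_def rep)
    have iv: "indep_var borel (\<lambda>\<omega>. \<psi> (restrict (\<lambda>i. X i \<omega>) J2)) borel (\<lambda>\<omega>. \<phi>G (restrict (\<lambda>i. X i \<omega>) (J1 k)))"
      by (rule indep_restrict[OF ind' J12 J2(2) J1(2) J2(1) J1(1)])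
    then have iv': "indep_var borel (\<lambda>\<omega>. 1 - r \<omega>) borel (\<lambda>\<omega>. G \<omega> $ i $ j)"
      by (simp add: \<psi>_def r_rep Gij)
    have i1: "integrable M (\<lambda>\<omega>. 1 - r \<omega>)" using intr by simp
    have i2: "integrable M (\<lambda>\<omega>. G \<omega> $ i $ j)" by (rule integrable_bounded_linear[OF bl_entry intG])
    have "integral\<^sup>L M (P (Suc k)) $ i $ j = integral\<^sup>L M (\<lambda>\<omega>. P (Suc k) \<omega> $ i $ j)"
      by (rule integral_bounded_linear[OF bl_entry intP, symmetric])
    also have "\<dots> = integral\<^sup>L M (\<lambda>\<omega>. r \<omega> * Pbar $ i $ j + (1 - r \<omega>) * G \<omega> $ i $ j)"
    proof (rule Bochner_Integration.integral_cong)
      fix \<omega> assume w: "\<omega> \<in> space M"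
      show "P (Suc k) \<omega> $ i $ j = r \<omega> * Pbar $ i $ j + (1 - r \<omega>) * G \<omega> $ i $ j"
        using lv[of "Suc k" \<omega>] uv[of "Suc k" \<omega>] w by (auto simp: P_def r_def G_def sand_def)
    qed simp
    also have "\<dots> = integral\<^sup>L M (\<lambda>\<omega>. r \<omega> * Pbar $ i $ j) + integral\<^sup>L M (\<lambda>\<omega>. (1 - r \<omega>) * G \<omega> $ i $ j)"
      by (rule Bochner_Integration.integral_add) (use intr indep_var_integrable[OF iv' i1 i2] in auto)
    also have "\<dots> = integral\<^sup>L M r * Pbar $ i $ j + integral\<^sup>L M (\<lambda>\<omega>. 1 - r \<omega>) * integral\<^sup>L M (\<lambda>\<omega>. G \<omega> $ i $ j)"
      by (simp add: indep_var_lebesgue_integral[OF iv' i1 i2])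
    also have "integral\<^sup>L M (\<lambda>\<omega>. G \<omega> $ i $ j) = integral\<^sup>L M G $ i $ j"
      by (rule integral_bounded_linear[OF bl_entry intG])
    finally show ?thesis using Er E1r by simp
  qed
  show ?thesis
    unfolding P_def[symmetric]
    by (simp add: Finite_Cartesian_Product.vec_eq_iff comp intGG sand_def algebra_simps)
qed

end

theorem lemma2:
  fixes M :: "'a measure"
    and A Q Pbar P0 :: "real^'n^'n"
    and C :: "real^'n^'m"
    and R :: "real^'m^'m"
    and gbar mu :: real
    and lam u :: "nat \<Rightarrow> 'a \<Rightarrow> nat"
  assumes "prob_space M"
    and "spectral_radius A < 1"
    and "pos_def Q" and "pos_def R"
    and "observable A C" and "controllable A (msqrt Q)"
    and "pos_def Pbar" and "Pbar = riccati A C Q R Pbar"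
    and "stabilizing A C Q R Pbar"
    and "0 < gbar" and "gbar < 1" and "0 < mu" and "mu < 1"
    and "prob_space.indep_vars M (\<lambda>_. count_space UNIV)
           (\<lambda>i. case i of Inl k \<Rightarrow> lam k | Inr k \<Rightarrow> u k) ({1..} <+> {1..})"
    and "\<And>k \<omega>. k \<ge> 1 \<Longrightarrow> \<omega> \<in> space M \<Longrightarrow> lam k \<omega> \<in> {0, 1}"
    and "\<And>k \<omega>. k \<ge> 1 \<Longrightarrow> \<omega> \<in> space M \<Longrightarrow> u k \<omega> \<in> {0, 1}"
    and "\<And>k. k \<ge> 1 \<Longrightarrow> measure M {\<omega> \<in> space M. lam k \<omega> = 0} = gbar"
    and "\<And>k. k \<ge> 1 \<Longrightarrow> measure M {\<omega> \<in> space M. u k \<omega> = 0} = mu"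
    and "pos_semidef P0"
  shows "(\<lambda>k. integral\<^sup>L M (Pseq A Q Pbar P0 lam u k))
     \<longlonglongrightarrow> (let q = gbar + (1 - gbar) * mu in
          ((1 - gbar) * (1 - mu)) *\<^sub>R lyap (sqrt q *\<^sub>R A) Pbar
          + q *\<^sub>R lyap (sqrt q *\<^sub>R A) Q)"
proof -
  obtain c where c: "\<And>k i j. \<bar>mpow A k $ i $ j\<bar> \<le> c"
    using mpow_bounded[OF assms(2)] by blast
  define q where "q = gbar + (1 - gbar) * mu"
  define p where "p = (1 - gbar) * (1 - mu)"
  have q0: "0 \<le> q" unfolding q_def using assms(10-13) by (simp add: mult_nonneg_nonneg)
  have q1: "q < 1"
  proof -
    have "0 < (1 - gbar) * (1 - mu)" using assms(11,13) by simp
    then show ?thesis unfolding q_def by (simp add: algebra_simps)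
  qed
  have pq: "p = 1 - q" unfolding p_def q_def by (simp add: algebra_simps)
  define e where "e k = integral\<^sup>L M (Pseq A Q Pbar P0 lam u k)" for k
  define sand where "sand Y = A ** Y ** transpose A" for Y :: "real^'n^'n"
  have lin: "linear sand" unfolding sand_def by (rule sand_linear)
  have rec: "e (Suc k) = p *\<^sub>R Pbar + q *\<^sub>R (sand (e k) + Q)" for k
    unfolding e_def p_def q_def sand_def
    by (rule prob_space.expect_rec[OF assms(1) assms(14-18)])
  define W where "W = lyap (sqrt q *\<^sub>R A) Pbar"
  define S where "S = lyap (sqrt q *\<^sub>R A) Q"
  have W: "W = q *\<^sub>R sand W + Pbar"
    unfolding W_def sand_def by (rule lyap_char[OF c q0 q1])
  have S: "S = q *\<^sub>R sand S + Q"
    unfolding S_def sand_def by (rule lyap_char[OF c q0 q1])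
  define Xs where "Xs = p *\<^sub>R W + q *\<^sub>R S"
  have sX: "sand Xs = p *\<^sub>R sand W + q *\<^sub>R sand S"
    unfolding Xs_def using lin by (simp add: linear_add linear_scale)
  have Xs: "Xs = q *\<^sub>R sand Xs + p *\<^sub>R Pbar + q *\<^sub>R Q"
  proof -
    have "Xs = p *\<^sub>R (q *\<^sub>R sand W + Pbar) + q *\<^sub>R (q *\<^sub>R sand S + Q)"
      unfolding Xs_def using W S by simp
    also have "\<dots> = q *\<^sub>R sand Xs + p *\<^sub>R Pbar + q *\<^sub>R Q"
      unfolding sX by (simp add: algebra_simps)
    finally show ?thesis .
  qed
  define Z where "Z k = e k - Xs" for k
  have Zrec: "Z (Suc k) = q *\<^sub>R (A ** Z k ** transpose A)" for k
  proof -
    have "Z (Suc k) = q *\<^sub>R (sand (e k) - sand Xs)"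
      unfolding Z_def rec using Xs by (simp add: algebra_simps)
    also have "\<dots> = q *\<^sub>R sand (Z k)"
      unfolding Z_def using lin by (simp add: linear_diff)
    finally show ?thesis unfolding sand_def .
  qed
  have Zf: "Z = (\<lambda>k. q ^ k *\<^sub>R (mpow A k ** Z 0 ** transpose (mpow A k)))"
  proof
    fix k show "Z k = q ^ k *\<^sub>R (mpow A k ** Z 0 ** transpose (mpow A k))"
      by (rule iter_form[of Z q A]) (rule Zrec)
  qed
  have "Z \<longlonglongrightarrow> 0"
    by (subst Zf) (rule decay[OF c q0 q1])
  then have "(\<lambda>k. Z k + Xs) \<longlonglongrightarrow> 0 + Xs"
    by (intro tendsto_add tendsto_const)
  then have "e \<longlonglongrightarrow> Xs" by (simp add: Z_def)
  then show ?thesis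
    unfolding e_def Xs_def W_def S_def p_def q_def Let_def by simp
qed

end
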